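(* For every integer $n \ge 3$, the graph $K_n \otimes K_n$ is not a circulant graph.
   Context: Graphs have no multiple edges but may have loops. The tensor product $G \otimes H$ of graphs $G$ and $H$ has vertex set $V(G)\times V(H)$, with $(g,h)$ adjacent to $(g',h')$ if and only if $g$ is adjacent to $g'$ in $G$ and $h$ is adjacent to $h'$ in $H$. For an integer $n\ge 1$ and a set $S$ of integers, the circulant graph $C_nS$ has vertex set $\{0,1,\dots,n-1\}$, with $i$ adjacent to $j$ if and only if $i-j \equiv \pm s \pmod n$ for some $s\in S$. A graph is circulant if it is isomorphic to some $C_nS$; equivalently, if its automorphism group contains a cyclic subgroup acting transitively on the vertices. $K_n$ denotes the complete graph on $n$ vertices (no loops). *)

theory Defs
  imports Main "HOL-Number_Theory.Cong"
begin

text \<open>A graph is represented by a vertex set V and a symmetric adjacency relation E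
(loops allowed, no multiple edges).\<close>

definition circulant_adj :: "nat \<Rightarrow> int set \<Rightarrow> nat \<Rightarrow> nat \<Rightarrow> bool" where
  "circulant_adj n S i j \<longleftrightarrow>
     (\<exists>s\<in>S. [int i - int j = s] (mod int n) \<or> [int i - int j = - s] (mod int n))"

definition graph_iso :: "'a set \<Rightarrow> ('a \<Rightarrow> 'a \<Rightarrow> bool) \<Rightarrow> 'b set \<Rightarrow> ('b \<Rightarrow> 'b \<Rightarrow> bool) \<Rightarrow> bool" where
  "graph_iso V E W F \<longleftrightarrow>
     (\<exists>f. bij_betw f V W \<and> (\<forall>u\<in>V. \<forall>v\<in>V. E u v \<longleftrightarrow> F (f u) (f v)))"

definition is_circulant :: "'a set \<Rightarrow> ('a \<Rightarrow> 'a \<Rightarrow> bool) \<Rightarrow> bool" where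
  "is_circulant V E \<longleftrightarrow> (\<exists>n \<ge> 1. \<exists>S::int set. graph_iso V E {0..<n} (circulant_adj n S))"

definition complete_adj :: "'a \<Rightarrow> 'a \<Rightarrow> bool" where
  "complete_adj u v \<longleftrightarrow> u \<noteq> v"

definition tensor_adj :: "('a \<Rightarrow> 'a \<Rightarrow> bool) \<Rightarrow> ('b \<Rightarrow> 'b \<Rightarrow> bool) \<Rightarrow> 'a \<times> 'b \<Rightarrow> 'a \<times> 'b \<Rightarrow> bool" where
  "tensor_adj E F x y \<longleftrightarrow> E (fst x) (fst y) \<and> F (snd x) (snd y)"

end

theory Submission
  imports Defs
begin

lemma cycle_exists:
  assumes fin: "finite A" and into: "\<forall>a\<in>A. h a \<in> A" and inj: "inj_on h A" and a: "a \<in> A"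
  shows "\<exists>x. 0 < x \<and> x \<le> card A \<and> (h^^x) a = a"
proof -
  have inA: "(h^^k) y \<in> A" if "y \<in> A" for k y
    using that by (induction k) (auto simp: into)
  have cancel: "(h^^i) y = (h^^i) z \<Longrightarrow> y \<in> A \<Longrightarrow> z \<in> A \<Longrightarrow> y = z" for i y z
  proof (induction i)
    case 0 then show ?case by simp
  next
    case (Suc i)
    have "h ((h^^i) y) = h ((h^^i) z)" using Suc.prems by simp
    then have "(h^^i) y = (h^^i) z" using inj inA Suc.prems by (meson inj_onD)
    then show ?case using Suc by blast
  qed
  have "\<not> inj_on (\<lambda>k. (h^^k) a) {0..card A}"
  proof
    assume "inj_on (\<lambda>k. (h^^k) a) {0..card A}"
    then have "card ((\<lambda>k. (h^^k) a) ` {0..card A}) = card {0..card A}" by (simp add: card_image)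
    moreover have "(\<lambda>k. (h^^k) a) ` {0..card A} \<subseteq> A" using inA a by auto
    ultimately have "card {0..card A} \<le> card A" using fin by (metis card_mono)
    then show False by simp
  qed
  then obtain i j where ij: "i \<in> {0..card A}" "j \<in> {0..card A}" "i \<noteq> j" "(h^^i) a = (h^^j) a"
    unfolding inj_on_def by blast
  have "\<exists>i j. i < j \<and> j \<le> card A \<and> (h^^i) a = (h^^j) a"
  proof (cases "i < j")
    case True then show ?thesis using ij by auto
  next
    case False then show ?thesis using ij by (intro exI[of _ j] exI[of _ i]) auto
  qed
  then obtain i j where ij2: "i < j" "j \<le> card A" "(h^^i) a = (h^^j) a" by blast
  have "(h^^j) a = (h^^i) ((h^^(j-i)) a)"
    using ij2(1) by (metis funpow_add le_add_diff_inverse less_imp_le o_apply)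
  then have "(h^^(j-i)) a = a" using cancel[of i "(h^^(j-i)) a" a] ij2 inA a by simp
  then show ?thesis using ij2 by (intro exI[of _ "j-i"]) auto
qed

lemma type_lemma:
  fixes \<sigma> :: "nat \<times> nat \<Rightarrow> nat \<times> nat" and n :: nat
  defines "P \<equiv> {0..<n} \<times> {0..<n}"
  assumes n2: "2 \<le> n" and inj: "inj_on \<sigma> P"
  and adjp: "\<forall>u\<in>P. \<forall>v\<in>P. (fst u \<noteq> fst v \<and> snd u \<noteq> snd v) \<longleftrightarrow> (fst (\<sigma> u) \<noteq> fst (\<sigma> v) \<and> snd (\<sigma> u) \<noteq> snd (\<sigma> v))"
  shows "((\<forall>a<n. \<forall>b<n. \<forall>b'<n. fst (\<sigma>(a,b)) = fst (\<sigma>(a,b'))) \<and> (\<forall>a<n. \<forall>a'<n. \<forall>b<n. snd (\<sigma>(a,b)) = snd (\<sigma>(a',b))))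
       \<or> ((\<forall>a<n. \<forall>b<n. \<forall>b'<n. snd (\<sigma>(a,b)) = snd (\<sigma>(a,b'))) \<and> (\<forall>a<n. \<forall>a'<n. \<forall>b<n. fst (\<sigma>(a,b)) = fst (\<sigma>(a',b))))"
proof -
  have inj': "\<sigma> u = \<sigma> v \<Longrightarrow> u \<in> P \<Longrightarrow> v \<in> P \<Longrightarrow> u = v" for u v using inj by (meson inj_onD)
  have adj: "u \<in> P \<Longrightarrow> v \<in> P \<Longrightarrow> (fst u \<noteq> fst v \<and> snd u \<noteq> snd v) \<longleftrightarrow> (fst (\<sigma> u) \<noteq> fst (\<sigma> v) \<and> snd (\<sigma> u) \<noteq> snd (\<sigma> v))" for u v
    using adjp by blast
  define RF where "RF a \<longleftrightarrow> (\<forall>b<n. \<forall>b'<n. fst (\<sigma>(a,b)) = fst (\<sigma>(a,b')))" for a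
  define RS where "RS a \<longleftrightarrow> (\<forall>b<n. \<forall>b'<n. snd (\<sigma>(a,b)) = snd (\<sigma>(a,b')))" for a
  define CF where "CF b \<longleftrightarrow> (\<forall>a<n. \<forall>a'<n. fst (\<sigma>(a,b)) = fst (\<sigma>(a',b)))" for b
  define CS where "CS b \<longleftrightarrow> (\<forall>a<n. \<forall>a'<n. snd (\<sigma>(a,b)) = snd (\<sigma>(a',b)))" for b
  have row: "RF a \<or> RS a" if a: "a < n" for a
  proof -
    have P0: "(a,0) \<in> P" and P1: "(a,1) \<in> P" using a n2 by (auto simp: P_def)
    have ne: "\<sigma>(a,0) \<noteq> \<sigma>(a,1)" using inj'[OF _ P0 P1] by auto
    have na: "fst (\<sigma>(a,0)) = fst (\<sigma>(a,1)) \<or> snd (\<sigma>(a,0)) = snd (\<sigma>(a,1))"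
      using adj[OF P0 P1] by auto
    have nb: "fst (\<sigma>(a,b)) = fst (\<sigma>(a,c)) \<or> snd (\<sigma>(a,b)) = snd (\<sigma>(a,c))" if "b < n" "c < n" for b c
      using adj[of "(a,b)" "(a,c)"] that a by (auto simp: P_def)
    show ?thesis
    proof (cases "fst (\<sigma>(a,0)) = fst (\<sigma>(a,1))")
      case True
      have "fst (\<sigma>(a,b)) = fst (\<sigma>(a,0))" if "b < n" for b
      proof (rule ccontr)
        assume h: "fst (\<sigma>(a,b)) \<noteq> fst (\<sigma>(a,0))"
        then have "snd (\<sigma>(a,b)) = snd (\<sigma>(a,0))" "snd (\<sigma>(a,b)) = snd (\<sigma>(a,1))"
          using nb[of b 0] nb[of b 1] that n2 True by auto
        then show False using ne True by (simp add: prod_eq_iff)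
      qed
      then show ?thesis unfolding RF_def by metis
    next
      case False
      then have S: "snd (\<sigma>(a,0)) = snd (\<sigma>(a,1))" using na by auto
      have "snd (\<sigma>(a,b)) = snd (\<sigma>(a,0))" if "b < n" for b
      proof (rule ccontr)
        assume h: "snd (\<sigma>(a,b)) \<noteq> snd (\<sigma>(a,0))"
        then have "fst (\<sigma>(a,b)) = fst (\<sigma>(a,0))" "fst (\<sigma>(a,b)) = fst (\<sigma>(a,1))"
          using nb[of b 0] nb[of b 1] that n2 S by auto
        then show False using False by simp
      qed
      then show ?thesis unfolding RS_def by metis
    qed
  qed
  have col: "CF b \<or> CS b" if b: "b < n" for b
  proof -
    have P0: "(0,b) \<in> P" and P1: "(1,b) \<in> P" using b n2 by (auto simp: P_def)
    have ne: "\<sigma>(0,b) \<noteq> \<sigma>(1,b)" using inj'[OF _ P0 P1] by auto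
    have na: "fst (\<sigma>(0,b)) = fst (\<sigma>(1,b)) \<or> snd (\<sigma>(0,b)) = snd (\<sigma>(1,b))"
      using adj[OF P0 P1] by auto
    have nb: "fst (\<sigma>(a,b)) = fst (\<sigma>(c,b)) \<or> snd (\<sigma>(a,b)) = snd (\<sigma>(c,b))" if "a < n" "c < n" for a c
      using adj[of "(a,b)" "(c,b)"] that b by (auto simp: P_def)
    show ?thesis
    proof (cases "fst (\<sigma>(0,b)) = fst (\<sigma>(1,b))")
      case True
      have "fst (\<sigma>(a,b)) = fst (\<sigma>(0,b))" if "a < n" for a
      proof (rule ccontr)
        assume h: "fst (\<sigma>(a,b)) \<noteq> fst (\<sigma>(0,b))"
        then have "snd (\<sigma>(a,b)) = snd (\<sigma>(0,b))" "snd (\<sigma>(a,b)) = snd (\<sigma>(1,b))"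
          using nb[of a 0] nb[of a 1] that n2 True by auto
        then show False using ne True by (simp add: prod_eq_iff)
      qed
      then show ?thesis unfolding CF_def by metis
    next
      case False
      then have S: "snd (\<sigma>(0,b)) = snd (\<sigma>(1,b))" using na by auto
      have "snd (\<sigma>(a,b)) = snd (\<sigma>(0,b))" if "a < n" for a
      proof (rule ccontr)
        assume h: "snd (\<sigma>(a,b)) \<noteq> snd (\<sigma>(0,b))"
        then have "fst (\<sigma>(a,b)) = fst (\<sigma>(0,b))" "fst (\<sigma>(a,b)) = fst (\<sigma>(1,b))"
          using nb[of a 0] nb[of a 1] that n2 S by auto
        then show False using False by simp
      qed
      then show ?thesis unfolding CS_def by metis
    qed
  qed
  have other: "\<exists>c<n. c \<noteq> a" if "a < n" for a
    proof (cases "a = 0")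
    case True then show ?thesis using n2 by (intro exI[of _ 1]) auto
  next
    case False then show ?thesis using n2 by (intro exI[of _ 0]) auto
  qed
  have XF: "\<not> (RF a \<and> CF b)" if ab: "a < n" "b < n" for a b
  proof
    assume h: "RF a \<and> CF b"
    obtain a' where a': "a' < n" "a' \<noteq> a" using other[OF ab(1)] by blast
    obtain b' where b': "b' < n" "b' \<noteq> b" using other[OF ab(2)] by blast
    have "fst (\<sigma>(a',b)) = fst (\<sigma>(a,b'))" using h a' b' ab unfolding RF_def CF_def by metis
    then show False using adj[of "(a',b)" "(a,b')"] a' b' ab by (auto simp: P_def)
  qed
  have XS: "\<not> (RS a \<and> CS b)" if ab: "a < n" "b < n" for a b
  proof
    assume h: "RS a \<and> CS b"
    obtain a' where a': "a' < n" "a' \<noteq> a" using other[OF ab(1)] by blast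
    obtain b' where b': "b' < n" "b' \<noteq> b" using other[OF ab(2)] by blast
    have "snd (\<sigma>(a',b)) = snd (\<sigma>(a,b'))" using h a' b' ab unfolding RS_def CS_def by metis
    then show False using adj[of "(a',b)" "(a,b')"] a' b' ab by (auto simp: P_def)
  qed
  have n0: "0 < n" using n2 by simp
  show ?thesis
  proof (cases "RF 0")
    case True
    then have C: "\<forall>b<n. CS b" using XF col n0 by blast
    then have "\<forall>a<n. RF a" using XS row n0 by blast
    then show ?thesis using C unfolding RF_def CS_def by blast
  next
    case False
    then have "RS 0" using row n0 by blast
    then have C: "\<forall>b<n. CF b" using XS col n0 by blast
    then have "\<forall>a<n. RS a" using XF row n0 by blast
    then show ?thesis using C unfolding RS_def CF_def by blast
  qed
qed

lemma funpow_fix_mult: "(h^^x) a = a \<Longrightarrow> (h^^(x*k)) a = a"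
proof (induction k)
  case 0 then show ?case by simp
next
  case (Suc k)
  have "(h^^(x * Suc k)) a = (h^^x) ((h^^(x*k)) a)" by (simp add: funpow_add)
  then show ?case using Suc by simp
qed

lemma main_contra:
  fixes \<sigma> :: "nat \<times> nat \<Rightarrow> nat \<times> nat" and n :: nat
  defines "P \<equiv> {0..<n} \<times> {0..<n}"
  assumes n3: "3 \<le> n" and into: "\<forall>u\<in>P. \<sigma> u \<in> P" and inj: "inj_on \<sigma> P"
  and adjp: "\<forall>u\<in>P. \<forall>v\<in>P. (fst u \<noteq> fst v \<and> snd u \<noteq> snd v) \<longleftrightarrow> (fst (\<sigma> u) \<noteq> fst (\<sigma> v) \<and> snd (\<sigma> u) \<noteq> snd (\<sigma> v))"
  and orbit: "\<forall>u\<in>P. \<forall>k. (\<sigma>^^k) u = u \<longrightarrow> n*n dvd k"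
  shows False
proof -
  have n2: "2 \<le> n" using n3 by simp
  have n0: "(0::nat) < n" using n3 by simp
  have adj: "u \<in> P \<Longrightarrow> v \<in> P \<Longrightarrow> (fst u \<noteq> fst v \<and> snd u \<noteq> snd v) \<longleftrightarrow> (fst (\<sigma> u) \<noteq> fst (\<sigma> v) \<and> snd (\<sigma> u) \<noteq> snd (\<sigma> v))" for u v
    using adjp by blast
  have inP: "a < n \<Longrightarrow> b < n \<Longrightarrow> \<sigma>(a,b) \<in> P" for a b using into by (auto simp: P_def)
  have P00: "(0,0) \<in> P" using n3 by (auto simp: P_def)
  have orb: "n*n dvd k" if "(\<sigma>^^k) u = u" "u \<in> P" for k u using orbit that by blast
  have fin: "finite {0..<n}" "card {0..<n} = n" by auto
  from type_lemma[OF n2 inj[unfolded P_def] adjp[unfolded P_def]]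
  consider (pres) "(\<forall>a<n. \<forall>b<n. \<forall>b'<n. fst (\<sigma>(a,b)) = fst (\<sigma>(a,b'))) \<and> (\<forall>a<n. \<forall>a'<n. \<forall>b<n. snd (\<sigma>(a,b)) = snd (\<sigma>(a',b)))"
    | (swap) "(\<forall>a<n. \<forall>b<n. \<forall>b'<n. snd (\<sigma>(a,b)) = snd (\<sigma>(a,b'))) \<and> (\<forall>a<n. \<forall>a'<n. \<forall>b<n. fst (\<sigma>(a,b)) = fst (\<sigma>(a',b)))"
    by blast
  then show False
  proof cases
    case pres
    define \<alpha> where "\<alpha> a = fst (\<sigma>(a,0))" for a
    define \<beta> where "\<beta> b = snd (\<sigma>(0,b))" for b
    have eq: "\<sigma>(a,b) = (\<alpha> a, \<beta> b)" if "a < n" "b < n" for a b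
    proof -
      have h1: "\<forall>b<n. \<forall>b'<n. fst (\<sigma>(a,b)) = fst (\<sigma>(a,b'))" using pres that by blast
      have h2: "\<forall>a'<n. snd (\<sigma>(a,b)) = snd (\<sigma>(a',b))" using pres that by blast
      have "fst (\<sigma>(a,b)) = \<alpha> a" using h1[rule_format, OF that(2) n0] by (simp add: \<alpha>_def)
      moreover have "snd (\<sigma>(a,b)) = \<beta> b" using h2[rule_format, OF n0] by (simp add: \<beta>_def)
      ultimately show ?thesis by (simp add: prod_eq_iff)
    qed
    have \<alpha>n: "\<alpha> a < n" if "a < n" for a using inP[of a 0] that n2 by (auto simp: P_def \<alpha>_def)
    have \<beta>n: "\<beta> b < n" if "b < n" for b using inP[of 0 b] that n2 by (auto simp: P_def \<beta>_def)
    have \<alpha>inj: "inj_on \<alpha> {0..<n}"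
    proof (rule inj_onI)
      fix a a' assume h: "a \<in> {0..<n}" "a' \<in> {0..<n}" "\<alpha> a = \<alpha> a'"
      show "a = a'"
      proof (rule ccontr)
        assume "a \<noteq> a'"
        then show False using adj[of "(a,0)" "(a',1)"] eq[of a 0] eq[of a' 1] h n2 by (auto simp: P_def)
      qed
    qed
    have \<beta>inj: "inj_on \<beta> {0..<n}"
    proof (rule inj_onI)
      fix b b' assume h: "b \<in> {0..<n}" "b' \<in> {0..<n}" "\<beta> b = \<beta> b'"
      show "b = b'"
      proof (rule ccontr)
        assume "b \<noteq> b'"
        then show False using adj[of "(0,b)" "(1,b')"] eq[of 0 b] eq[of 1 b'] h n2 by (auto simp: P_def)
      qed
    qed
    have it: "(\<sigma>^^k) (a,b) = ((\<alpha>^^k) a, (\<beta>^^k) b) \<and> (\<alpha>^^k) a < n \<and> (\<beta>^^k) b < n" if "a < n" "b < n" for k a b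
    proof (induction k)
      case 0 then show ?case using that by simp
    next
      case (Suc k)
      then show ?case using eq[of "(\<alpha>^^k) a" "(\<beta>^^k) b"] \<alpha>n[of "(\<alpha>^^k) a"] \<beta>n[of "(\<beta>^^k) b"] by simp
    qed
    obtain x where x: "0 < x" "x \<le> n" "(\<alpha>^^x) 0 = 0"
      proof -
      have "\<forall>a\<in>{0..<n}. \<alpha> a \<in> {0..<n}" using \<alpha>n by simp
      moreover have "(0::nat) \<in> {0..<n}" using n2 by simp
      ultimately have "\<exists>x. 0 < x \<and> x \<le> card {0..<n} \<and> (\<alpha>^^x) 0 = 0" by (rule cycle_exists[OF fin(1) _ \<alpha>inj])
      then show ?thesis using that by auto
    qed
    obtain y where y: "0 < y" "y \<le> n" "(\<beta>^^y) 0 = 0"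
      proof -
      have "\<forall>a\<in>{0..<n}. \<beta> a \<in> {0..<n}" using \<beta>n by simp
      moreover have "(0::nat) \<in> {0..<n}" using n2 by simp
      ultimately have "\<exists>x. 0 < x \<and> x \<le> card {0..<n} \<and> (\<beta>^^x) 0 = 0" by (rule cycle_exists[OF fin(1) _ \<beta>inj])
      then show ?thesis using that by auto
    qed
    have "(\<alpha>^^(x*y)) 0 = 0" using funpow_fix_mult[OF x(3)] by blast
    moreover have "(\<beta>^^(x*y)) 0 = 0" using funpow_fix_mult[OF y(3), of x] by (simp add: mult.commute)
    ultimately have "(\<sigma>^^(x*y)) (0,0) = (0,0)" using it[of 0 0 "x*y"] n2 by simp
    then have d: "n*n dvd x*y" using orb P00 by blast
    have "x*y \<le> n*n" using x y by (simp add: mult_le_mono)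
    moreover have "n*n \<le> x*y" using d x y by (simp add: dvd_imp_le)
    ultimately have "x*y = n*n" by linarith
    have xn: "x = n"
    proof (rule ccontr)
      assume "x \<noteq> n" then have "x < n" using x by simp
      moreover have "x*y \<le> x*n" using y by simp
      ultimately have "x*y < n*n" using n2 by (meson le_less_trans mult_less_cancel2 le0 less_le_trans)
      then show False using \<open>x*y = n*n\<close> by simp
    qed
    have yn: "y = n"
    proof (rule ccontr)
      assume "y \<noteq> n" then have "y < n" using y by simp
      moreover have "x*y \<le> n*y" using x by simp
      ultimately have "x*y < n*n" using n2 by (meson le_less_trans mult_less_cancel1 le0 less_le_trans)
      then show False using \<open>x*y = n*n\<close> by simp
    qed
    then have "x = n \<and> y = n" using xn by simp
    then have "(\<sigma>^^n) (0,0) = (0,0)" using it[of 0 0 n] x y n2 by simp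
    then have "n*n dvd n" using orb P00 by blast
    then have "n*n \<le> n" using n2 by (simp add: dvd_imp_le)
    moreover have "2*n \<le> n*n" using n2 by (simp add: mult_le_mono1)
    ultimately show False using n2 by simp
  next
    case swap
    define \<alpha> where "\<alpha> a = snd (\<sigma>(a,0))" for a
    define \<beta> where "\<beta> b = fst (\<sigma>(0,b))" for b
    have eq: "\<sigma>(a,b) = (\<beta> b, \<alpha> a)" if "a < n" "b < n" for a b
    proof -
      have h1: "\<forall>b<n. \<forall>b'<n. snd (\<sigma>(a,b)) = snd (\<sigma>(a,b'))" using swap that by blast
      have h2: "\<forall>a'<n. fst (\<sigma>(a,b)) = fst (\<sigma>(a',b))" using swap that by blast
      have "snd (\<sigma>(a,b)) = \<alpha> a" using h1[rule_format, OF that(2) n0] by (simp add: \<alpha>_def)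
      moreover have "fst (\<sigma>(a,b)) = \<beta> b" using h2[rule_format, OF n0] by (simp add: \<beta>_def)
      ultimately show ?thesis by (simp add: prod_eq_iff)
    qed
    have \<alpha>n: "\<alpha> a < n" if "a < n" for a using inP[of a 0] that n2 by (auto simp: P_def \<alpha>_def)
    have \<beta>n: "\<beta> b < n" if "b < n" for b using inP[of 0 b] that n2 by (auto simp: P_def \<beta>_def)
    have \<alpha>inj: "inj_on \<alpha> {0..<n}"
    proof (rule inj_onI)
      fix a a' assume h: "a \<in> {0..<n}" "a' \<in> {0..<n}" "\<alpha> a = \<alpha> a'"
      show "a = a'"
      proof (rule ccontr)
        assume "a \<noteq> a'"
        then show False using adj[of "(a,0)" "(a',1)"] eq[of a 0] eq[of a' 1] h n2 by (auto simp: P_def)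
      qed
    qed
    have \<beta>inj: "inj_on \<beta> {0..<n}"
    proof (rule inj_onI)
      fix b b' assume h: "b \<in> {0..<n}" "b' \<in> {0..<n}" "\<beta> b = \<beta> b'"
      show "b = b'"
      proof (rule ccontr)
        assume "b \<noteq> b'"
        then show False using adj[of "(0,b)" "(1,b')"] eq[of 0 b] eq[of 1 b'] h n2 by (auto simp: P_def)
      qed
    qed
    define \<gamma> where "\<gamma> = \<beta> \<circ> \<alpha>"
    have \<gamma>n: "\<gamma> a < n" if "a < n" for a using that \<alpha>n \<beta>n by (simp add: \<gamma>_def)
    have \<gamma>inj: "inj_on \<gamma> {0..<n}" unfolding \<gamma>_def
    proof (rule inj_onI)
      fix a a' assume h: "a \<in> {0..<n}" "a' \<in> {0..<n}" "(\<beta> \<circ> \<alpha>) a = (\<beta> \<circ> \<alpha>) a'"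
      then have "\<alpha> a = \<alpha> a'" using \<beta>inj \<alpha>n by (simp add: inj_on_def)
      then show "a = a'" using \<alpha>inj h by (simp add: inj_on_def)
    qed
    have it: "(\<sigma>^^(2*k)) (a, \<alpha> a) = ((\<gamma>^^k) a, \<alpha> ((\<gamma>^^k) a)) \<and> (\<gamma>^^k) a < n" if "a < n" for k a
    proof (induction k)
      case 0 then show ?case using that by simp
    next
      case (Suc k)
      define c where "c = (\<gamma>^^k) a"
      have c: "c < n" using Suc c_def by simp
      have "(\<sigma>^^(2*Suc k)) (a, \<alpha> a) = \<sigma> (\<sigma> ((\<sigma>^^(2*k)) (a, \<alpha> a)))" by simp
      also have "\<dots> = \<sigma> (\<sigma> (c, \<alpha> c))" using Suc c_def by simp
      also have "\<dots> = (\<gamma> c, \<alpha> (\<gamma> c))" using c eq \<alpha>n \<beta>n \<gamma>n by (simp add: \<gamma>_def)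
      finally show ?case using c_def \<gamma>n c by simp
    qed
    obtain x where x: "0 < x" "x \<le> n" "(\<gamma>^^x) 0 = 0"
      proof -
      have "\<forall>a\<in>{0..<n}. \<gamma> a \<in> {0..<n}" using \<gamma>n by simp
      moreover have "(0::nat) \<in> {0..<n}" using n2 by simp
      ultimately have "\<exists>x. 0 < x \<and> x \<le> card {0..<n} \<and> (\<gamma>^^x) 0 = 0" by (rule cycle_exists[OF fin(1) _ \<gamma>inj])
      then show ?thesis using that by auto
    qed
    have Pa: "(0, \<alpha> 0) \<in> P" using \<alpha>n n2 by (auto simp: P_def)
    have "(\<sigma>^^(2*x)) (0, \<alpha> 0) = (0, \<alpha> 0)" using it[of 0 x] x n2 by simp
    then have d: "n*n dvd 2*x" using orb Pa by blast
    have "3*n \<le> n*n" using n3 by (simp add: mult_le_mono1)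
    then have "2*x < n*n" using x n3 by linarith
    then show False using d x by (simp add: nat_dvd_not_less)
  qed
qed

lemma shift_cong: "[int ((i+1) mod m) - int ((j+1) mod m) = int i - int j] (mod int m)"
proof -
  have "int ((i+1) mod m) = (1 + int i) mod int m" "int ((j+1) mod m) = (1 + int j) mod int m"
    by (simp_all add: zmod_int)
  moreover have "((1 + x) mod M - (1 + y) mod M) mod M = (x - y) mod M" for x y M :: int
    by (simp add: mod_diff_eq)
  ultimately show ?thesis unfolding cong_def by simp
qed

lemma circ_shift:
  "circulant_adj m S ((i+1) mod m) ((j+1) mod m) \<longleftrightarrow> circulant_adj m S i j"
proof -
  have c: "[int ((i+1) mod m) - int ((j+1) mod m) = int i - int j] (mod int m)" by (rule shift_cong)
  have "[int ((i+1) mod m) - int ((j+1) mod m) = s] (mod int m) \<longleftrightarrow> [int i - int j = s] (mod int m)" for s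
    using c by (meson cong_sym cong_trans)
  then show ?thesis unfolding circulant_adj_def by simp
qed

theorem theorem4:
  fixes n :: nat
  assumes "n \<ge> 3"
  shows "\<not> is_circulant ({0..<n} \<times> {0..<n})
                         (tensor_adj (complete_adj :: nat \<Rightarrow> nat \<Rightarrow> bool) (complete_adj :: nat \<Rightarrow> nat \<Rightarrow> bool))"
proof
  define P where "P = {0..<n} \<times> {0..<n}"
  assume "is_circulant ({0..<n} \<times> {0..<n}) (tensor_adj (complete_adj :: nat \<Rightarrow> nat \<Rightarrow> bool) (complete_adj :: nat \<Rightarrow> nat \<Rightarrow> bool))"
  then obtain m S f where m1: "1 \<le> m" and bij: "bij_betw f P {0..<m}"
    and iso: "\<forall>u\<in>P. \<forall>v\<in>P. tensor_adj (complete_adj :: nat \<Rightarrow> nat \<Rightarrow> bool) (complete_adj :: nat \<Rightarrow> nat \<Rightarrow> bool) u v \<longleftrightarrow> circulant_adj m S (f u) (f v)"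
    unfolding is_circulant_def graph_iso_def P_def by blast
  have adjeq: "tensor_adj (complete_adj :: nat \<Rightarrow> nat \<Rightarrow> bool) (complete_adj :: nat \<Rightarrow> nat \<Rightarrow> bool) u v \<longleftrightarrow> (fst u \<noteq> fst v \<and> snd u \<noteq> snd v)" for u v
    by (simp add: tensor_adj_def complete_adj_def)
  have mcard: "m = n*n"
    using bij_betw_same_card[OF bij] by (simp add: P_def card_cartesian_product)
  have img: "f ` P = {0..<m}" using bij by (simp add: bij_betw_def)
  have finj: "inj_on f P" using bij by (simp add: bij_betw_def)
  define g where "g = inv_into P f"
  have gP: "g y \<in> P" if "y < m" for y using img that unfolding g_def by (metis atLeastLessThan_iff inv_into_into le0)
  have fg: "f (g y) = y" if "y < m" for y using img that unfolding g_def by (metis atLeastLessThan_iff f_inv_into_f le0)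
  have fm: "f u < m" if "u \<in> P" for u using img that by auto
  define \<sigma> where "\<sigma> u = g ((f u + 1) mod m)" for u
  have m0: "0 < m" using m1 by simp
  have into: "\<forall>u\<in>P. \<sigma> u \<in> P" unfolding \<sigma>_def using gP m0 by simp
  have fs: "f (\<sigma> u) = (f u + 1) mod m" for u unfolding \<sigma>_def using fg m0 by simp
  have inj: "inj_on \<sigma> P"
  proof (rule inj_onI)
    fix u v assume uv: "u \<in> P" "v \<in> P" "\<sigma> u = \<sigma> v"
    then have "(f u + 1) mod m = (f v + 1) mod m" using fs by metis
    then have "[f u + 1 = f v + 1] (mod m)" by (simp add: cong_def)
    then have "[f u = f v] (mod m)" by (metis cong_add_rcancel_nat)
    then have "f u = f v" using cong_less_modulus_unique_nat fm uv by blast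
    then show "u = v" using finj uv by (meson inj_onD)
  qed
  have adjp: "\<forall>u\<in>P. \<forall>v\<in>P. (fst u \<noteq> fst v \<and> snd u \<noteq> snd v) \<longleftrightarrow> (fst (\<sigma> u) \<noteq> fst (\<sigma> v) \<and> snd (\<sigma> u) \<noteq> snd (\<sigma> v))"
  proof (intro ballI)
    fix u v assume uv: "u \<in> P" "v \<in> P"
    have "(fst (\<sigma> u) \<noteq> fst (\<sigma> v) \<and> snd (\<sigma> u) \<noteq> snd (\<sigma> v)) \<longleftrightarrow> circulant_adj m S (f (\<sigma> u)) (f (\<sigma> v))"
      using iso into uv adjeq by metis
    also have "\<dots> \<longleftrightarrow> circulant_adj m S (f u) (f v)" unfolding fs by (rule circ_shift)
    also have "\<dots> \<longleftrightarrow> (fst u \<noteq> fst v \<and> snd u \<noteq> snd v)" using iso uv adjeq by metis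
    finally show "(fst u \<noteq> fst v \<and> snd u \<noteq> snd v) \<longleftrightarrow> (fst (\<sigma> u) \<noteq> fst (\<sigma> v) \<and> snd (\<sigma> u) \<noteq> snd (\<sigma> v))" by simp
  qed
  have iter: "(\<sigma>^^k) u = g ((f u + k) mod m)" if "u \<in> P" for k u
  proof (induction k)
    case 0 then show ?case using that fm unfolding g_def by (simp add: inv_into_f_f finj)
  next
    case (Suc k)
    have "(\<sigma>^^Suc k) u = \<sigma> (g ((f u + k) mod m))" using Suc by simp
    also have "\<dots> = g (((f u + k) mod m + 1) mod m)" unfolding \<sigma>_def using fg m0 by simp
    also have "\<dots> = g ((f u + Suc k) mod m)" by (simp add: mod_Suc_eq)
    finally show ?case .
  qed
  have orbit: "\<forall>u\<in>P. \<forall>k. (\<sigma>^^k) u = u \<longrightarrow> n*n dvd k"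
  proof (intro ballI allI impI)
    fix u k assume u: "u \<in> P" and h: "(\<sigma>^^k) u = u"
    have "f u = (f u + k) mod m" using iter[OF u, of k] h fg m0 by (metis mod_less_divisor)
    then have "[f u + k = f u] (mod m)" using fm u by (simp add: cong_def)
    then have "[k = 0] (mod m)" by (metis cong_add_lcancel_0_nat)
    then show "n*n dvd k" using mcard by (simp add: cong_0_iff)
  qed
  show False
    using main_contra[OF assms into[unfolded P_def] inj[unfolded P_def] adjp[unfolded P_def] orbit[unfolded P_def]] .
qed

end
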